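(* There is an absolute constant $C>0$ such that the following holds. Let $\varepsilon>0$, let $f:\mathbb R\to\mathbb R$ be $1$-smooth, and let $x_-<x_+$ satisfy $f'(x_-)\le-\varepsilon$ and $0\le f(x_-)-f(x_+)\le\frac{\varepsilon}{4}(x_+-x_-)$. Then BinarySearchII$(x_-,x_+)$ terminates and outputs an $\varepsilon$-stationary point of $f$ using at most $C\bigl(1+\max\{0,\log\frac{x_+-x_-}{\varepsilon}\}\bigr)$ oracle queries.
   Context: $f:\mathbb R\to\mathbb R$ is $1$-smooth if it is continuously differentiable and $f'$ is $1$-Lipschitz; $x$ is an $\varepsilon$-stationary point if $|f'(x)|<\varepsilon$. The oracle returns $(f(x),f'(x))$ on query $x$; values at already-queried points (including $x_\pm$) are reused. Subroutines (a recursive call's output is returned unchanged): BinarySearch$(x_0,x_1)$: $m=(x_0+x_1)/2$; if $|f'(m)|<\varepsilon$ return $m$; if $f'(m)\le-\varepsilon$ return BinarySearch$(m,x_1)$; if $f'(m)>0$ return BinarySearch$(x_0,m)$. BinarySearchIII$(x_-,x_+)$: $m=(x_-+x_+)/2$; if $|f'(m)|<\varepsilon$ return $m$; else if $f'(m)>0$ return BinarySearch$(x_-,m)$; else if $f(m)\ge f(x_-)$ return BinarySearchIII$(x_-,m)$; else return BinarySearchIII$(m,x_+)$. BinarySearchII$(x_-,x_+)$: $m=(x_-+x_+)/2$; if $|f'(m)|<\varepsilon$ return $m$; else if $f'(m)>0$ return BinarySearch$(x_-,m)$; else if $f(m)\ge f(x_-)$ return BinarySearchIII$(x_-,m)$;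 else if $f(m)\le f(x_+)$ return BinarySearchIII$(m,x_+)$; else if $f(x_-)-f(m)\le\frac12(f(x_-)-f(x_+))$ return BinarySearchII$(x_-,m)$; else return BinarySearchII$(m,x_+)$. *)

theory Defs
  imports Complex_Main
begin

definition one_smooth :: "(real \<Rightarrow> real) \<Rightarrow> (real \<Rightarrow> real) \<Rightarrow> bool" where
  "one_smooth f f' \<longleftrightarrow> (\<forall>x. (f has_real_derivative f' x) (at x))
     \<and> continuous_on UNIV f' \<and> (\<forall>x y. \<bar>f' x - f' y\<bar> \<le> \<bar>x - y\<bar>)"

text \<open>A derivation of
  bsearch f f' eps a b out q  means: the call BinarySearch(a,b) terminates,
  returns out, and makes q oracle queries in total (one new query at each
  midpoint; values at the endpoints are reused).  The algorithms are
  deterministic, so such a derivation exists iff the call terminates.\<close>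
inductive bsearch :: "(real \<Rightarrow> real) \<Rightarrow> (real \<Rightarrow> real) \<Rightarrow> real \<Rightarrow> real \<Rightarrow> real \<Rightarrow> real \<Rightarrow> nat \<Rightarrow> bool"
  for f f' :: "real \<Rightarrow> real" and eps :: real where
  bs_stop: "\<bar>f' ((a + b) / 2)\<bar> < eps \<Longrightarrow> bsearch f f' eps a b ((a + b) / 2) 1"
| bs_right: "\<not> \<bar>f' ((a + b) / 2)\<bar> < eps \<Longrightarrow> f' ((a + b) / 2) \<le> - eps \<Longrightarrow>
     bsearch f f' eps ((a + b) / 2) b out q \<Longrightarrow> bsearch f f' eps a b out (Suc q)"
| bs_left: "\<not> \<bar>f' ((a + b) / 2)\<bar> < eps \<Longrightarrow> \<not> f' ((a + b) / 2) \<le> - eps \<Longrightarrow>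
     f' ((a + b) / 2) > 0 \<Longrightarrow>
     bsearch f f' eps a ((a + b) / 2) out q \<Longrightarrow> bsearch f f' eps a b out (Suc q)"

inductive bsearch3 :: "(real \<Rightarrow> real) \<Rightarrow> (real \<Rightarrow> real) \<Rightarrow> real \<Rightarrow> real \<Rightarrow> real \<Rightarrow> real \<Rightarrow> nat \<Rightarrow> bool"
  for f f' :: "real \<Rightarrow> real" and eps :: real where
  bs3_stop: "\<bar>f' ((a + b) / 2)\<bar> < eps \<Longrightarrow> bsearch3 f f' eps a b ((a + b) / 2) 1"
| bs3_pos: "\<not> \<bar>f' ((a + b) / 2)\<bar> < eps \<Longrightarrow> f' ((a + b) / 2) > 0 \<Longrightarrow>
     bsearch f f' eps a ((a + b) / 2) out q \<Longrightarrow> bsearch3 f f' eps a b out (Suc q)"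
| bs3_left: "\<not> \<bar>f' ((a + b) / 2)\<bar> < eps \<Longrightarrow> \<not> f' ((a + b) / 2) > 0 \<Longrightarrow>
     f ((a + b) / 2) \<ge> f a \<Longrightarrow>
     bsearch3 f f' eps a ((a + b) / 2) out q \<Longrightarrow> bsearch3 f f' eps a b out (Suc q)"
| bs3_right: "\<not> \<bar>f' ((a + b) / 2)\<bar> < eps \<Longrightarrow> \<not> f' ((a + b) / 2) > 0 \<Longrightarrow>
     \<not> f ((a + b) / 2) \<ge> f a \<Longrightarrow>
     bsearch3 f f' eps ((a + b) / 2) b out q \<Longrightarrow> bsearch3 f f' eps a b out (Suc q)"

inductive bsearch2 :: "(real \<Rightarrow> real) \<Rightarrow> (real \<Rightarrow> real) \<Rightarrow> real \<Rightarrow> real \<Rightarrow> real \<Rightarrow> real \<Rightarrow> nat \<Rightarrow> bool"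
  for f f' :: "real \<Rightarrow> real" and eps :: real where
  bs2_stop: "\<bar>f' ((a + b) / 2)\<bar> < eps \<Longrightarrow> bsearch2 f f' eps a b ((a + b) / 2) 1"
| bs2_pos: "\<not> \<bar>f' ((a + b) / 2)\<bar> < eps \<Longrightarrow> f' ((a + b) / 2) > 0 \<Longrightarrow>
     bsearch f f' eps a ((a + b) / 2) out q \<Longrightarrow> bsearch2 f f' eps a b out (Suc q)"
| bs2_geq: "\<not> \<bar>f' ((a + b) / 2)\<bar> < eps \<Longrightarrow> \<not> f' ((a + b) / 2) > 0 \<Longrightarrow>
     f ((a + b) / 2) \<ge> f a \<Longrightarrow>
     bsearch3 f f' eps a ((a + b) / 2) out q \<Longrightarrow> bsearch2 f f' eps a b out (Suc q)"
| bs2_leq: "\<not> \<bar>f' ((a + b) / 2)\<bar> < eps \<Longrightarrow> \<not> f' ((a + b) / 2) > 0 \<Longrightarrow>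
     \<not> f ((a + b) / 2) \<ge> f a \<Longrightarrow> f ((a + b) / 2) \<le> f b \<Longrightarrow>
     bsearch3 f f' eps ((a + b) / 2) b out q \<Longrightarrow> bsearch2 f f' eps a b out (Suc q)"
| bs2_left: "\<not> \<bar>f' ((a + b) / 2)\<bar> < eps \<Longrightarrow> \<not> f' ((a + b) / 2) > 0 \<Longrightarrow>
     \<not> f ((a + b) / 2) \<ge> f a \<Longrightarrow> \<not> f ((a + b) / 2) \<le> f b \<Longrightarrow>
     f a - f ((a + b) / 2) \<le> (f a - f b) / 2 \<Longrightarrow>
     bsearch2 f f' eps a ((a + b) / 2) out q \<Longrightarrow> bsearch2 f f' eps a b out (Suc q)"
| bs2_right: "\<not> \<bar>f' ((a + b) / 2)\<bar> < eps \<Longrightarrow> \<not> f' ((a + b) / 2) > 0 \<Longrightarrow>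
     \<not> f ((a + b) / 2) \<ge> f a \<Longrightarrow> \<not> f ((a + b) / 2) \<le> f b \<Longrightarrow>
     \<not> f a - f ((a + b) / 2) \<le> (f a - f b) / 2 \<Longrightarrow>
     bsearch2 f f' eps ((a + b) / 2) b out q \<Longrightarrow> bsearch2 f f' eps a b out (Suc q)"

end

theory Submission
  imports Defs
begin

lemma lip: "one_smooth f f' \<Longrightarrow> \<bar>f' x - f' y\<bar> \<le> \<bar>x - y\<bar>"
  unfolding one_smooth_def by blast

lemma key:
  assumes S: "one_smooth f f'" and ab: "a < b" and fa: "f' a \<le> - eps"
  shows "f b - f a \<le> - eps * (b - a) + (b - a)^2 / 2"
proof -
  define g where "g x = f x + eps * x - (x - a)^2 / 2" for x
  have d: "\<And>x. (f has_real_derivative f' x) (at x)" using S unfolding one_smooth_def by blast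
  have "g b \<le> g a"
  proof (rule DERIV_nonpos_imp_nonincreasing[of a b g])
    show "a \<le> b" using ab by simp
    fix x assume x: "a \<le> x" "x \<le> b"
    have D: "(g has_real_derivative (f' x + eps - (x - a))) (at x)"
      unfolding g_def
      apply (rule derivative_eq_intros d refl | simp add: power2_eq_square)+
      apply (simp add: field_simps)
      done
    have "\<bar>f' x - f' a\<bar> \<le> \<bar>x - a\<bar>" by (rule lip[OF S])
    then have "f' x + eps - (x - a) \<le> 0" using x fa by auto
    then show "\<exists>y. (g has_real_derivative y) (at x) \<and> y \<le> 0" using D by blast
  qed
  then show ?thesis unfolding g_def by (simp add: algebra_simps)
qed

lemma divlem: "(L::real) > 0 \<Longrightarrow> c * L \<le> L^2 / 2 \<Longrightarrow> 2 * c \<le> L"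
proof -
  assume L: "L > 0" and h: "c * L \<le> L^2 / 2"
  have "L * (2 * c) \<le> L * L" using h by (simp add: power2_eq_square algebra_simps)
  then show ?thesis using L by simp
qed

lemma bs_term:
  assumes S: "one_smooth f f'" and e: "eps > 0"
  shows "\<forall>a b. a < b \<longrightarrow> f' a \<le> - eps \<longrightarrow> f' b \<ge> eps \<longrightarrow> b - a < 2^n * eps \<longrightarrow>
     (\<exists>out q. bsearch f f' eps a b out q \<and> \<bar>f' out\<bar> < eps \<and> q \<le> n)"
proof (induction n)
  case 0
  show ?case
  proof (intro allI impI)
    fix a b :: real assume h: "a < b" "f' a \<le> - eps" "f' b \<ge> eps" "b - a < 2^0 * eps"
    have "\<bar>f' b - f' a\<bar> \<le> \<bar>b - a\<bar>" by (rule lip[OF S])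
    with h e show "\<exists>out q. bsearch f f' eps a b out q \<and> \<bar>f' out\<bar> < eps \<and> q \<le> 0" by auto
  qed
next
  case (Suc n)
  show ?case
  proof (intro allI impI)
    fix a b :: real assume h: "a < b" "f' a \<le> - eps" "f' b \<ge> eps" "b - a < 2^Suc n * eps"
    define m where "m = (a + b) / 2"
    have hm0: "b - m = (b - a) / 2" "m - a = (b - a) / 2" by (auto simp: m_def field_simps)
    have hm: "b - m < 2^n * eps" "m - a < 2^n * eps" "a < m" "m < b" using h hm0 by auto
    consider "\<bar>f' m\<bar> < eps" | "\<not> \<bar>f' m\<bar> < eps" "f' m \<le> - eps" | "\<not> \<bar>f' m\<bar> < eps" "\<not> f' m \<le> - eps" "f' m \<ge> eps"
      by linarith
    then show "\<exists>out q. bsearch f f' eps a b out q \<and> \<bar>f' out\<bar> < eps \<and> q \<le> Suc n"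
    proof cases
      case 1
      then show ?thesis using bs_stop[of f' a b eps f] by (auto simp: m_def)
    next
      case 2
      then obtain out q where "bsearch f f' eps m b out q" "\<bar>f' out\<bar> < eps" "q \<le> n"
        using Suc.IH[rule_format, of m b] hm h 2 by blast
      then show ?thesis using bs_right[of f' a b eps f out q] 2 by (auto simp: m_def)
    next
      case 3
      then obtain out q where "bsearch f f' eps a m out q" "\<bar>f' out\<bar> < eps" "q \<le> n"
        using Suc.IH[rule_format, of a m] hm h 3 by blast
      then show ?thesis using bs_left[of f' a b eps f out q] 3 e by (auto simp: m_def)
    qed
  qed
qed

lemma bs3_term:
  assumes S: "one_smooth f f'" and e: "eps > 0"
  shows "\<forall>a b. a < b \<longrightarrow> f' a \<le> - eps \<longrightarrow> f a \<le> f b \<longrightarrow> b - a < 2^n * eps \<longrightarrow>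
     (\<exists>out q. bsearch3 f f' eps a b out q \<and> \<bar>f' out\<bar> < eps \<and> q \<le> n)"
proof (induction n)
  case 0
  show ?case
  proof (intro allI impI)
    fix a b :: real assume h: "a < b" "f' a \<le> - eps" "f a \<le> f b" "b - a < 2^0 * eps"
    have "f b - f a \<le> - eps * (b - a) + (b - a)^2 / 2" by (rule key[OF S h(1,2)])
    then have "2 * eps \<le> b - a" using h by (intro divlem) auto
    with h e show "\<exists>out q. bsearch3 f f' eps a b out q \<and> \<bar>f' out\<bar> < eps \<and> q \<le> 0" by auto
  qed
next
  case (Suc n)
  show ?case
  proof (intro allI impI)
    fix a b :: real assume h: "a < b" "f' a \<le> - eps" "f a \<le> f b" "b - a < 2^Suc n * eps"
    define m where "m = (a + b) / 2"
    have hm0: "b - m = (b - a) / 2" "m - a = (b - a) / 2" by (auto simp: m_def field_simps)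
    have hm: "b - m < 2^n * eps" "m - a < 2^n * eps" "a < m" "m < b" using h hm0 by auto
    consider "\<bar>f' m\<bar> < eps" | "\<not> \<bar>f' m\<bar> < eps" "f' m > 0"
      | "\<not> \<bar>f' m\<bar> < eps" "\<not> f' m > 0" "f m \<ge> f a"
      | "\<not> \<bar>f' m\<bar> < eps" "\<not> f' m > 0" "\<not> f m \<ge> f a"
      by linarith
    then show "\<exists>out q. bsearch3 f f' eps a b out q \<and> \<bar>f' out\<bar> < eps \<and> q \<le> Suc n"
    proof cases
      case 1
      then show ?thesis using bs3_stop[of f' a b eps f] by (auto simp: m_def)
    next
      case 2
      then have "f' m \<ge> eps" by linarith
      then obtain out q where "bsearch f f' eps a m out q" "\<bar>f' out\<bar> < eps" "q \<le> n"
        using bs_term[OF S e, of n, rule_format, of a m] hm h \<open>f' m \<ge> eps\<close> by blast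
      then show ?thesis using bs3_pos[of f' a b eps f out q] 2 by (auto simp: m_def)
    next
      case 3
      then obtain out q where "bsearch3 f f' eps a m out q" "\<bar>f' out\<bar> < eps" "q \<le> n"
        using Suc.IH[rule_format, of a m] hm h 3 by blast
      then show ?thesis using bs3_left[of f' a b eps f out q] 3 by (auto simp: m_def)
    next
      case 4
      then have "f' m \<le> - eps" by linarith
      have "\<exists>out q. bsearch3 f f' eps m b out q \<and> \<bar>f' out\<bar> < eps \<and> q \<le> n"
        by (rule Suc.IH[rule_format, of m b]) (use hm h 4 \<open>f' m \<le> - eps\<close> in linarith)+
      then obtain out q where "bsearch3 f f' eps m b out q" "\<bar>f' out\<bar> < eps" "q \<le> n"
        by blast
      then show ?thesis using bs3_right[of f' a b eps f out q] 4 by (auto simp: m_def)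
    qed
  qed
qed

lemma bs2_term:
  assumes S: "one_smooth f f'" and e: "eps > 0"
  shows "\<forall>a b. a < b \<longrightarrow> f' a \<le> - eps \<longrightarrow> 0 \<le> f a - f b \<longrightarrow> f a - f b \<le> eps / 4 * (b - a)
     \<longrightarrow> b - a < 2^n * eps \<longrightarrow>
     (\<exists>out q. bsearch2 f f' eps a b out q \<and> \<bar>f' out\<bar> < eps \<and> q \<le> n)"
proof (induction n)
  case 0
  show ?case
  proof (intro allI impI)
    fix a b :: real assume h: "a < b" "f' a \<le> - eps" "0 \<le> f a - f b" "f a - f b \<le> eps / 4 * (b - a)"
      "b - a < 2^0 * eps"
    have "f b - f a \<le> - eps * (b - a) + (b - a)^2 / 2" by (rule key[OF S h(1,2)])
    then have "2 * (3/4 * eps) \<le> b - a" using h by (intro divlem) (auto simp: algebra_simps)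
    with h e show "\<exists>out q. bsearch2 f f' eps a b out q \<and> \<bar>f' out\<bar> < eps \<and> q \<le> 0" by auto
  qed
next
  case (Suc n)
  show ?case
  proof (intro allI impI)
    fix a b :: real assume h: "a < b" "f' a \<le> - eps" "0 \<le> f a - f b" "f a - f b \<le> eps / 4 * (b - a)"
      "b - a < 2^Suc n * eps"
    define m where "m = (a + b) / 2"
    have hm0: "b - m = (b - a) / 2" "m - a = (b - a) / 2" by (auto simp: m_def field_simps)
    have hm: "b - m < 2^n * eps" "m - a < 2^n * eps" "a < m" "m < b" "b - m = (b - a) / 2"
      "m - a = (b - a) / 2" using h hm0 by auto
    have hh: "(f a - f b) / 2 \<le> eps / 4 * (b - a) / 2" by (rule divide_right_mono[OF h(4)]) simp
    consider "\<bar>f' m\<bar> < eps" | "\<not> \<bar>f' m\<bar> < eps" "f' m > 0"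
      | "\<not> \<bar>f' m\<bar> < eps" "\<not> f' m > 0" "f m \<ge> f a"
      | "\<not> \<bar>f' m\<bar> < eps" "\<not> f' m > 0" "\<not> f m \<ge> f a" "f m \<le> f b"
      | "\<not> \<bar>f' m\<bar> < eps" "\<not> f' m > 0" "\<not> f m \<ge> f a" "\<not> f m \<le> f b"
          "f a - f m \<le> (f a - f b) / 2"
      | "\<not> \<bar>f' m\<bar> < eps" "\<not> f' m > 0" "\<not> f m \<ge> f a" "\<not> f m \<le> f b"
          "\<not> f a - f m \<le> (f a - f b) / 2"
      by linarith
    then show "\<exists>out q. bsearch2 f f' eps a b out q \<and> \<bar>f' out\<bar> < eps \<and> q \<le> Suc n"
    proof cases
      case 1
      then show ?thesis using bs2_stop[of f' a b eps f] by (auto simp: m_def)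
    next
      case 2
      then have "f' m \<ge> eps" by linarith
      then obtain out q where "bsearch f f' eps a m out q" "\<bar>f' out\<bar> < eps" "q \<le> n"
        using bs_term[OF S e, of n, rule_format, of a m] hm h \<open>f' m \<ge> eps\<close> by blast
      then show ?thesis using bs2_pos[of f' a b eps f out q] 2 by (auto simp: m_def)
    next
      case 3
      then obtain out q where "bsearch3 f f' eps a m out q" "\<bar>f' out\<bar> < eps" "q \<le> n"
        using bs3_term[OF S e, of n, rule_format, of a m] hm h 3 by blast
      then show ?thesis using bs2_geq[of f' a b eps f out q] 3 by (auto simp: m_def)
    next
      case 4
      then have "f' m \<le> - eps" by linarith
      have "\<exists>out q. bsearch3 f f' eps m b out q \<and> \<bar>f' out\<bar> < eps \<and> q \<le> n"
        by (rule bs3_term[OF S e, of n, rule_format, of m b]) (use hm h 4 \<open>f' m \<le> - eps\<close> in linarith)+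
      then obtain out q where "bsearch3 f f' eps m b out q" "\<bar>f' out\<bar> < eps" "q \<le> n"
        by blast
      then show ?thesis using bs2_leq[of f' a b eps f out q] 4 by (auto simp: m_def)
    next
      case 5
      have eq5: "eps / 4 * (m - a) = (eps / 4 * (b - a)) / 2" using hm(6) by simp
      have "f a - f m \<le> (eps / 4 * (b - a)) / 2"
        using 5(5) hh by argo
      then have "f a - f m \<le> eps / 4 * (m - a)" unfolding eq5 .
      have "\<exists>out q. bsearch2 f f' eps a m out q \<and> \<bar>f' out\<bar> < eps \<and> q \<le> n"
        by (rule Suc.IH[rule_format, of a m]) (use hm h 5 \<open>f a - f m \<le> eps / 4 * (m - a)\<close> in linarith)+
      then obtain out q where "bsearch2 f f' eps a m out q" "\<bar>f' out\<bar> < eps" "q \<le> n"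
        by blast
      then show ?thesis using bs2_left[of f' a b eps f out q] 5 by (auto simp: m_def)
    next
      case 6
      then have fm: "f' m \<le> - eps" by linarith
      have eq6: "eps / 4 * (b - m) = (eps / 4 * (b - a)) / 2" using hm(5) by simp
      have "f m - f b \<le> (eps / 4 * (b - a)) / 2"
        using 6(5) hh by argo
      then have "f m - f b \<le> eps / 4 * (b - m)" unfolding eq6 .
      have "\<exists>out q. bsearch2 f f' eps m b out q \<and> \<bar>f' out\<bar> < eps \<and> q \<le> n"
        by (rule Suc.IH[rule_format, of m b]) (use hm h 6 fm \<open>f m - f b \<le> eps / 4 * (b - m)\<close> in linarith)+
      then obtain out q where "bsearch2 f f' eps m b out q" "\<bar>f' out\<bar> < eps" "q \<le> n"
        by blast
      then show ?thesis using bs2_right[of f' a b eps f out q] 6 by (auto simp: m_def)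
    qed
  qed
qed

lemma main:
  fixes eps :: real and f f' :: "real \<Rightarrow> real" and xm xp :: real
  assumes e: "eps > 0" and S: "one_smooth f f'" and h: "xm < xp" "f' xm \<le> - eps"
    "0 \<le> f xm - f xp" "f xm - f xp \<le> eps / 4 * (xp - xm)"
  shows "\<exists>out q. bsearch2 f f' eps xm xp out q \<and> \<bar>f' out\<bar> < eps \<and>
          real q \<le> (1 + 1 / ln 2) * (1 + max 0 (ln ((xp - xm) / eps)))"
proof -
  have "f xp - f xm \<le> - eps * (xp - xm) + (xp - xm)^2 / 2" by (rule key[OF S h(1,2)])
  then have "2 * (3/4 * eps) \<le> xp - xm" using h by (intro divlem) (auto simp: algebra_simps)
  define x where "x = (xp - xm) / eps"
  have x1: "x \<ge> 1" using e \<open>2 * (3/4 * eps) \<le> xp - xm\<close> unfolding x_def by (subst le_divide_eq_1_pos) auto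
  have lx: "log 2 x \<ge> 0" using x1 by simp
  define n where "n = nat \<lfloor>log 2 x\<rfloor> + 1"
  have nr: "real n = of_int \<lfloor>log 2 x\<rfloor> + 1" using lx by (simp add: n_def)
  have "log 2 x < real n" using nr by linarith
  then have "x < 2 powr real n" using x1 by (simp add: log_less_iff)
  then have "x < 2 ^ n" by (simp add: powr_realpow)
  then have L: "xp - xm < 2 ^ n * eps" using e unfolding x_def by (simp add: divide_less_eq)
  obtain out q where o: "bsearch2 f f' eps xm xp out q" "\<bar>f' out\<bar> < eps" "q \<le> n"
    using bs2_term[OF S e, of n, rule_format, of xm xp] h L by blast
  have "real q \<le> log 2 x + 1" using o(3) nr by linarith
  also have "\<dots> = 1 + ln x / ln 2" by (simp add: log_def)
  also have "\<dots> \<le> (1 + 1 / ln 2) * (1 + max 0 (ln x))"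
  proof -
    have "ln x \<ge> 0" using x1 by simp
    moreover have "1 / ln (2::real) > 0" by simp
    moreover have "ln x / ln 2 \<le> (1 + ln x) / ln 2" by (simp add: divide_right_mono)
    ultimately show ?thesis by (simp add: distrib_left distrib_right)
  qed
  finally have "real q \<le> (1 + 1 / ln 2) * (1 + max 0 (ln ((xp - xm) / eps)))"
    unfolding x_def .
  with o(1,2) show ?thesis by (intro exI[of _ out] exI[of _ q] conjI)
qed

theorem lemmaA6:
  "\<exists>C::real. C > 0 \<and>
    (\<forall>(eps::real) (f::real \<Rightarrow> real) f' (xm::real) xp.
       eps > 0 \<longrightarrow> one_smooth f f' \<longrightarrow> xm < xp \<longrightarrow> f' xm \<le> - eps \<longrightarrow>
       0 \<le> f xm - f xp \<longrightarrow> f xm - f xp \<le> eps / 4 * (xp - xm) \<longrightarrow>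
       (\<exists>out q. bsearch2 f f' eps xm xp out q \<and> \<bar>f' out\<bar> < eps \<and>
          real q \<le> C * (1 + max 0 (ln ((xp - xm) / eps)))))"
proof (rule exI[of _ "1 + 1 / ln (2::real)"], rule conjI)
  show "0 < 1 + 1 / ln (2::real)" by (simp add: add_pos_pos)
next
  show "\<forall>(eps::real) (f::real \<Rightarrow> real) f' (xm::real) xp.
       eps > 0 \<longrightarrow> one_smooth f f' \<longrightarrow> xm < xp \<longrightarrow> f' xm \<le> - eps \<longrightarrow>
       0 \<le> f xm - f xp \<longrightarrow> f xm - f xp \<le> eps / 4 * (xp - xm) \<longrightarrow>
       (\<exists>out q. bsearch2 f f' eps xm xp out q \<and> \<bar>f' out\<bar> < eps \<and>
          real q \<le> (1 + 1 / ln (2::real)) * (1 + max 0 (ln ((xp - xm) / eps))))"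
    by (intro allI impI) (rule main)
qed

end
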